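(* Let $n,m,d\ge 1$. For each $i\in\{1,\dots,n\}$ let $\mathcal{B}_i\in\mathbb{R}^{l_i\times m}$, $Z_i\in\mathbb{R}^{k_i\times l_i}$ and $\mu_i\ge 0$ be such that $M_i=\mathcal{B}_i\mathcal{B}_i^{\top}+\mu_i Z_i^{\top}Z_i$ is invertible. Define $Q_i=\mathcal{B}_i^{\top}M_i^{-1}\mathcal{B}_i\in\mathbb{R}^{m\times m}$, $\mathcal{Q}_{II}=\sum_{i=1}^n Q_i$ and $\mathcal{P}_{II}=\sum_{i=1}^n(I_m-Q_i)=nI_m-\mathcal{Q}_{II}$, and let $\mathbf{1}\in\mathbb{R}^m$ be the all-ones vector. Then the following statements are equivalent: (a) $\mathcal{P}_{II}\mathbf{1}=0$; (b) $\mathcal{Q}_{II}\mathbf{1}=n\mathbf{1}$; (c) $Q_i\mathbf{1}=\mathbf{1}$ for every $i\in\{1,\dots,n\}$; (d) the function $S\mapsto\mathrm{tr}(S\mathcal{P}_{II}S^{\top})$ on $\mathbb{R}^{d\times m}$ is invariant to translations, i.e. $\mathrm{tr}\big((S+t\mathbf{1}^{\top})\mathcal{P}_{II}(S+t\mathbf{1}^{\top})^{\top}\big)=\mathrm{tr}(S\mathcal{P}_{II}S^{\top})$ for all $S\in\mathbb{R}^{d\times m}$ and all $t\in\mathbb{R}^d$; (e) for every $i\in\{1,\dots,n\}$ there exists $x_i\in\mathbb{R}^{l_i}$ with $\mathcal{B}_i^{\top}x_i=\mathbf{1}$ and, if $\mu_i>0$, additionally $Z_ix_i=0$.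
   Context: In the paper, $\mathcal{B}_i=\mathcal{B}_i(D_i)$ is the matrix obtained by applying a feature map $\beta_i:\mathbb{R}^d\to\mathbb{R}^{l_i}$ to each column (point) of a datum shape $D_i\in\mathbb{R}^{d\times m}$, $Z_i$ is a regularization matrix and $\mu_i$ a smoothing weight of a linear basis warp $p\mapsto W^{\top}\beta_i(p)$; for the statement only the matrices themselves matter. *)

theory Defs
  imports "Jordan_Normal_Form.Matrix"
begin

definition mtrace :: "'a :: comm_ring_1 mat \<Rightarrow> 'a" where
  "mtrace A = (\<Sum>i<dim_row A. A $$ (i, i))"

definition minv :: "'a :: comm_ring_1 mat \<Rightarrow> 'a mat" where
  "minv A = (SOME B. B \<in> carrier_mat (dim_row A) (dim_row A) \<and> inverts_mat A B \<and> inverts_mat B A)"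

definition ones_vec :: "nat \<Rightarrow> 'a :: {zero,one} vec" where
  "ones_vec m = vec m (\<lambda>_. 1)"

definition outer_prod :: "'a :: semiring_1 vec \<Rightarrow> 'a vec \<Rightarrow> 'a mat" where
  "outer_prod t s = mat (dim_vec t) (dim_vec s) (\<lambda>(r, c). t $ r * s $ c)"

definition Mmat :: "real mat \<Rightarrow> real mat \<Rightarrow> real \<Rightarrow> real mat" where
  "Mmat B Z \<mu> = B * B\<^sup>T + \<mu> \<cdot>\<^sub>m (Z\<^sup>T * Z)"

definition Qmat :: "real mat \<Rightarrow> real mat \<Rightarrow> real \<Rightarrow> real mat" where
  "Qmat B Z \<mu> = B\<^sup>T * minv (Mmat B Z \<mu>) * B"

definition QII :: "nat \<Rightarrow> nat \<Rightarrow> (nat \<Rightarrow> real mat) \<Rightarrow> (nat \<Rightarrow> real mat) \<Rightarrow> (nat \<Rightarrow> real) \<Rightarrow> real mat" where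
  "QII n m B Z \<mu> = mat m m (\<lambda>(r, c). \<Sum>i=1..n. Qmat (B i) (Z i) (\<mu> i) $$ (r, c))"

definition PII :: "nat \<Rightarrow> nat \<Rightarrow> (nat \<Rightarrow> real mat) \<Rightarrow> (nat \<Rightarrow> real mat) \<Rightarrow> (nat \<Rightarrow> real) \<Rightarrow> real mat" where
  "PII n m B Z \<mu> = mat m m (\<lambda>(r, c). \<Sum>i=1..n. (1\<^sub>m m - Qmat (B i) (Z i) (\<mu> i)) $$ (r, c))"

end

theory Submission
  imports Defs
begin

lemma transp_sp:
  fixes A :: "'a::comm_ring_1 mat"
  assumes A: "A \<in> carrier_mat nr nc" and u: "u \<in> carrier_vec nc" and v: "v \<in> carrier_vec nr"
  shows "(A *\<^sub>v u) \<bullet> v = u \<bullet> (A\<^sup>T *\<^sub>v v)"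
proof -
  have "(A *\<^sub>v u) \<bullet> v = (\<Sum>i<nr. (\<Sum>j<nc. A $$ (i,j) * u $ j) * v $ i)"
    using A u v by (auto simp: scalar_prod_def row_def lessThan_atLeast0 intro!: sum.cong)
  also have "\<dots> = (\<Sum>j<nc. u $ j * (\<Sum>i<nr. A $$ (i,j) * v $ i))"
    by (simp add: sum_distrib_left sum_distrib_right sum.swap[of _ "{..<nr}"] ac_simps)
  also have "\<dots> = u \<bullet> (A\<^sup>T *\<^sub>v v)"
    using A u v by (auto simp: scalar_prod_def col_def lessThan_atLeast0 intro!: sum.cong)
  finally show ?thesis .
qed

lemma minv_props:
  fixes A :: "'a::comm_ring_1 mat"
  assumes A: "A \<in> carrier_mat n n" and inv: "invertible_mat A"
  shows "minv A \<in> carrier_mat n n" "A * minv A = 1\<^sub>m n" "minv A * A = 1\<^sub>m n"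
proof -
  obtain C where C: "inverts_mat A C" "inverts_mat C A" using inv unfolding invertible_mat_def by blast
  have "A * C = 1\<^sub>m n" using C A unfolding inverts_mat_def by auto
  hence "dim_col C = n" by (metis index_mult_mat(3) index_one_mat(3))
  moreover have "C * A = 1\<^sub>m (dim_row C)" using C unfolding inverts_mat_def by auto
  hence "dim_row C = n" using A by (metis carrier_matD(2) index_mult_mat(3) index_one_mat(3))
  ultimately have "C \<in> carrier_mat (dim_row A) (dim_row A) \<and> inverts_mat A C \<and> inverts_mat C A"
    using A C by auto
  hence "minv A \<in> carrier_mat (dim_row A) (dim_row A) \<and> inverts_mat A (minv A) \<and> inverts_mat (minv A) A"
    unfolding minv_def by (rule someI)
  thus "minv A \<in> carrier_mat n n" "A * minv A = 1\<^sub>m n" "minv A * A = 1\<^sub>m n"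
    using A unfolding inverts_mat_def by auto
qed

lemma smult_mat_vec:
  fixes A :: "real mat"
  assumes "A \<in> carrier_mat nr nc" "v \<in> carrier_vec nc"
  shows "(c \<cdot>\<^sub>m A) *\<^sub>v v = c \<cdot>\<^sub>v (A *\<^sub>v v)"
  using assms by (intro eq_vecI) (auto simp: scalar_prod_def sum_distrib_left ac_simps)

lemma key:
  fixes B Z :: "real mat" and \<mu> :: real
  assumes B: "B \<in> carrier_mat l m" and Z: "Z \<in> carrier_mat k l" and mu: "\<mu> \<ge> 0"
    and inv: "invertible_mat (Mmat B Z \<mu>)"
  defines "w \<equiv> minv (Mmat B Z \<mu>) *\<^sub>v (B *\<^sub>v ones_vec m)"
  shows "w \<in> carrier_vec l"
    "Qmat B Z \<mu> *\<^sub>v ones_vec m = B\<^sup>T *\<^sub>v w"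
    "ones_vec m \<bullet> ones_vec m - ones_vec m \<bullet> (Qmat B Z \<mu> *\<^sub>v ones_vec m)
       = (ones_vec m - B\<^sup>T *\<^sub>v w) \<bullet> (ones_vec m - B\<^sup>T *\<^sub>v w) + \<mu> * ((Z *\<^sub>v w) \<bullet> (Z *\<^sub>v w))"
proof -
  let ?M = "Mmat B Z \<mu>"
  let ?o = "ones_vec m :: real vec"
  have o: "?o \<in> carrier_vec m" by (simp add: ones_vec_def)
  have M: "?M \<in> carrier_mat l l" using B Z by (simp add: Mmat_def)
  note mi = minv_props[OF M inv]
  show w: "w \<in> carrier_vec l" unfolding w_def using mi B o by auto
  have Bt: "B\<^sup>T \<in> carrier_mat m l" using B by simp
  have Bo: "B *\<^sub>v ?o \<in> carrier_vec l" using B o by simp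
  have "Qmat B Z \<mu> *\<^sub>v ?o = (B\<^sup>T * minv ?M) *\<^sub>v (B *\<^sub>v ?o)" unfolding Qmat_def
    using assoc_mult_mat_vec[OF mult_carrier_mat[OF Bt mi(1)] B o] .
  also have "\<dots> = B\<^sup>T *\<^sub>v w" unfolding w_def using assoc_mult_mat_vec[OF Bt mi(1) Bo] .
  finally show Q1: "Qmat B Z \<mu> *\<^sub>v ?o = B\<^sup>T *\<^sub>v w" .
  have "?M *\<^sub>v w = (?M * minv ?M) *\<^sub>v (B *\<^sub>v ?o)" unfolding w_def
    using assoc_mult_mat_vec[OF M mi(1) Bo] by simp
  hence Mw: "?M *\<^sub>v w = B *\<^sub>v ?o" using mi(2) Bo by simp
  define y where "y = B\<^sup>T *\<^sub>v w"
  define z where "z = Z *\<^sub>v w"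
  have y: "y \<in> carrier_vec m" unfolding y_def using B w by auto
  have z: "z \<in> carrier_vec k" unfolding z_def using Z w by auto
  have Mw2: "?M *\<^sub>v w = B *\<^sub>v y + \<mu> \<cdot>\<^sub>v (Z\<^sup>T *\<^sub>v z)"
    unfolding Mmat_def y_def z_def using B Z w
    by (simp add: add_mult_distrib_mat_vec[of _ l l] smult_mat_vec[of _ l l])
  have "?o \<bullet> y = (B *\<^sub>v ?o) \<bullet> w" unfolding y_def using transp_sp[OF B o w] by simp
  also have "\<dots> = (B *\<^sub>v y) \<bullet> w + \<mu> * ((Z\<^sup>T *\<^sub>v z) \<bullet> w)"
  proof -
    have "(B *\<^sub>v ?o) \<bullet> w = (B *\<^sub>v y + \<mu> \<cdot>\<^sub>v (Z\<^sup>T *\<^sub>v z)) \<bullet> w" using Mw Mw2 by simp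
    also have "\<dots> = (B *\<^sub>v y) \<bullet> w + (\<mu> \<cdot>\<^sub>v (Z\<^sup>T *\<^sub>v z)) \<bullet> w"
      by (rule add_scalar_prod_distrib[of _ l]) (use B Z y z w in auto)
    finally show ?thesis using B Z y z w by simp
  qed
  also have "(B *\<^sub>v y) \<bullet> w = y \<bullet> y" using transp_sp[OF B y w] unfolding y_def by simp
  also have "(Z\<^sup>T *\<^sub>v z) \<bullet> w = z \<bullet> z" using transp_sp[of "Z\<^sup>T" l k z w] Z z w unfolding z_def by simp
  finally have e: "?o \<bullet> y = y \<bullet> y + \<mu> * (z \<bullet> z)" .
  have "(?o - y) \<bullet> (?o - y) = ?o \<bullet> ?o - 2 * (?o \<bullet> y) + y \<bullet> y"
  proof -
    have c: "y \<bullet> ?o = ?o \<bullet> y" using comm_scalar_prod[OF y o] .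
    have "(?o - y) \<bullet> (?o - y) = ?o \<bullet> (?o - y) - y \<bullet> (?o - y)"
      by (rule minus_scalar_prod_distrib) (use o y in auto)
    also have "\<dots> = (?o \<bullet> ?o - ?o \<bullet> y) - (y \<bullet> ?o - y \<bullet> y)"
      using scalar_prod_minus_distrib[OF o o y] scalar_prod_minus_distrib[OF y o y] by simp
    finally show ?thesis using c by simp
  qed
  thus "?o \<bullet> ?o - ?o \<bullet> (Qmat B Z \<mu> *\<^sub>v ?o) = (?o - B\<^sup>T *\<^sub>v w) \<bullet> (?o - B\<^sup>T *\<^sub>v w) + \<mu> * ((Z *\<^sub>v w) \<bullet> (Z *\<^sub>v w))"
    using e Q1 unfolding y_def z_def by simp
qed

lemma sub_zero_eq:
  assumes "(a::real vec) \<in> carrier_vec n" "b \<in> carrier_vec n" "a - b = 0\<^sub>v n"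
  shows "b = a"
proof (intro eq_vecI)
  fix i assume i: "i < dim_vec a"
  have "(a - b) $ i = 0" using assms i by simp
  moreover have "(a - b) $ i = a $ i - b $ i" using assms(1,2) i by simp
  ultimately show "b $ i = a $ i" by simp
qed (use assms in auto)

lemma sp_self_nonneg: "(v::real vec) \<bullet> v \<ge> 0"
  by (auto simp: scalar_prod_def intro!: sum_nonneg)

lemma sp_self_zero: assumes "(v::real vec) \<in> carrier_vec n" "v \<bullet> v = 0" shows "v = 0\<^sub>v n"
proof -
  have "\<forall>i\<in>{0..<n}. v $ i * v $ i = 0"
    using assms by (subst sum_nonneg_eq_0_iff[symmetric]) (auto simp: scalar_prod_def)
  thus ?thesis using assms by (intro eq_vecI) auto
qed

lemma transpose_smult_mat: "(c \<cdot>\<^sub>m A)\<^sup>T = c \<cdot>\<^sub>m A\<^sup>T"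
  by (intro eq_matI) auto

lemma Mmat_sym:
  assumes B: "B \<in> carrier_mat l m" and Z: "Z \<in> carrier_mat k l"
  shows "(Mmat B Z \<mu>)\<^sup>T = Mmat B Z \<mu>"
  using B Z by (simp add: Mmat_def transpose_add[of _ l l] transpose_mult[of _ l m] transpose_mult[of _ l k] transpose_smult_mat)

lemma per_i:
  fixes B Z :: "real mat" and \<mu> :: real
  assumes B: "B \<in> carrier_mat l m" and Z: "Z \<in> carrier_mat k l" and mu: "\<mu> \<ge> 0"
    and inv: "invertible_mat (Mmat B Z \<mu>)"
  shows "ones_vec m \<bullet> ones_vec m - ones_vec m \<bullet> (Qmat B Z \<mu> *\<^sub>v ones_vec m) \<ge> 0"
    and "ones_vec m \<bullet> ones_vec m - ones_vec m \<bullet> (Qmat B Z \<mu> *\<^sub>v ones_vec m) = 0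
        \<Longrightarrow> Qmat B Z \<mu> *\<^sub>v ones_vec m = ones_vec m"
    and "Qmat B Z \<mu> *\<^sub>v ones_vec m = ones_vec m \<Longrightarrow> \<exists>x \<in> carrier_vec l.
            B\<^sup>T *\<^sub>v x = ones_vec m \<and> (\<mu> > 0 \<longrightarrow> Z *\<^sub>v x = 0\<^sub>v k)"
    and "x \<in> carrier_vec l \<Longrightarrow> B\<^sup>T *\<^sub>v x = ones_vec m \<Longrightarrow> (\<mu> > 0 \<longrightarrow> Z *\<^sub>v x = 0\<^sub>v k) \<Longrightarrow>
          Qmat B Z \<mu> *\<^sub>v ones_vec m = ones_vec m \<and>
          (\<forall>s\<in>carrier_vec m. ones_vec m \<bullet> (Qmat B Z \<mu> *\<^sub>v s) = ones_vec m \<bullet> s)"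
proof -
  let ?M = "Mmat B Z \<mu>"
  let ?o = "ones_vec m :: real vec"
  define w where "w = minv (Mmat B Z \<mu>) *\<^sub>v (B *\<^sub>v ones_vec m)"
  note K = key[OF B Z mu inv, folded w_def]
  have o: "?o \<in> carrier_vec m" by (simp add: ones_vec_def)
  have M: "?M \<in> carrier_mat l l" using B Z by (simp add: Mmat_def)
  note mi = minv_props[OF M inv]
  have Bt: "B\<^sup>T \<in> carrier_mat m l" using B by simp
  have nn: "0 \<le> \<mu> * ((Z *\<^sub>v w) \<bullet> (Z *\<^sub>v w))" using mu sp_self_nonneg by simp
  show "?o \<bullet> ?o - ?o \<bullet> (Qmat B Z \<mu> *\<^sub>v ?o) \<ge> 0" using K(3) nn sp_self_nonneg[of "?o - B\<^sup>T *\<^sub>v w"] by linarith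
  show "Qmat B Z \<mu> *\<^sub>v ?o = ?o" if h: "?o \<bullet> ?o - ?o \<bullet> (Qmat B Z \<mu> *\<^sub>v ?o) = 0"
  proof -
    have "(?o - B\<^sup>T *\<^sub>v w) \<bullet> (?o - B\<^sup>T *\<^sub>v w) = 0"
      using K(3) h nn sp_self_nonneg[of "?o - B\<^sup>T *\<^sub>v w"] by linarith
    moreover have c: "?o - B\<^sup>T *\<^sub>v w \<in> carrier_vec m" using o K(1) Bt by simp
    ultimately have "?o - B\<^sup>T *\<^sub>v w = 0\<^sub>v m" using sp_self_zero by blast
    moreover have bw: "B\<^sup>T *\<^sub>v w \<in> carrier_vec m" using K(1) Bt by simp
    ultimately have "B\<^sup>T *\<^sub>v w = ?o" using sub_zero_eq[OF o bw] by blast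
    thus ?thesis using K(2) by simp
  qed
  show "\<exists>x \<in> carrier_vec l. B\<^sup>T *\<^sub>v x = ?o \<and> (\<mu> > 0 \<longrightarrow> Z *\<^sub>v x = 0\<^sub>v k)"
    if h: "Qmat B Z \<mu> *\<^sub>v ?o = ?o"
  proof (intro bexI conjI impI)
    show "w \<in> carrier_vec l" by (rule K(1))
    show b: "B\<^sup>T *\<^sub>v w = ?o" using h K(2) by simp
    assume "\<mu> > 0"
    have "(?o - B\<^sup>T *\<^sub>v w) \<bullet> (?o - B\<^sup>T *\<^sub>v w) = 0" using b o by simp
    hence "\<mu> * ((Z *\<^sub>v w) \<bullet> (Z *\<^sub>v w)) = 0" using K(3) h by simp
    hence "(Z *\<^sub>v w) \<bullet> (Z *\<^sub>v w) = 0" using \<open>\<mu> > 0\<close> by simp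
    thus "Z *\<^sub>v w = 0\<^sub>v k" using sp_self_zero[of _ k] Z K(1) by auto
  qed
  assume x: "x \<in> carrier_vec l" and bx: "B\<^sup>T *\<^sub>v x = ?o" and zx: "\<mu> > 0 \<longrightarrow> Z *\<^sub>v x = 0\<^sub>v k"
  have Mx: "?M *\<^sub>v x = B *\<^sub>v ?o"
  proof -
    have "?M *\<^sub>v x = B *\<^sub>v (B\<^sup>T *\<^sub>v x) + \<mu> \<cdot>\<^sub>v (Z\<^sup>T *\<^sub>v (Z *\<^sub>v x))"
      unfolding Mmat_def using B Z x
      by (simp add: add_mult_distrib_mat_vec[of _ l l] smult_mat_vec[of _ l l])
    also have "\<mu> \<cdot>\<^sub>v (Z\<^sup>T *\<^sub>v (Z *\<^sub>v x)) = 0\<^sub>v l"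
    proof (cases "\<mu> > 0")
      case True thus ?thesis using zx Z by (intro eq_vecI) auto
    next
      case False hence "\<mu> = 0" using mu by simp
      thus ?thesis using Z x by (intro eq_vecI) auto
    qed
    finally show ?thesis using bx B o by simp
  qed
  have Bo: "B *\<^sub>v ?o \<in> carrier_vec l" using B o by simp
  have "w = (minv ?M * ?M) *\<^sub>v x" unfolding w_def using Mx assoc_mult_mat_vec[OF mi(1) M x] by simp
  hence wx: "w = x" using mi(3) x by simp
  show "Qmat B Z \<mu> *\<^sub>v ?o = ?o \<and> (\<forall>s\<in>carrier_vec m. ?o \<bullet> (Qmat B Z \<mu> *\<^sub>v s) = ?o \<bullet> s)"
  proof (intro conjI ballI)
    show "Qmat B Z \<mu> *\<^sub>v ?o = ?o" using K(2) wx bx by simp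
    fix s :: "real vec" assume s: "s \<in> carrier_vec m"
    have Bs: "B *\<^sub>v s \<in> carrier_vec l" using B s by simp
    have "Qmat B Z \<mu> *\<^sub>v s = (B\<^sup>T * minv ?M) *\<^sub>v (B *\<^sub>v s)" unfolding Qmat_def
      using assoc_mult_mat_vec[OF mult_carrier_mat[OF Bt mi(1)] B s] .
    also have "\<dots> = B\<^sup>T *\<^sub>v (minv ?M *\<^sub>v (B *\<^sub>v s))" using assoc_mult_mat_vec[OF Bt mi(1) Bs] .
    finally have Qs: "Qmat B Z \<mu> *\<^sub>v s = B\<^sup>T *\<^sub>v (minv ?M *\<^sub>v (B *\<^sub>v s))" .
    have v: "minv ?M *\<^sub>v (B *\<^sub>v s) \<in> carrier_vec l" using mi(1) Bs by simp
    have "?o \<bullet> (Qmat B Z \<mu> *\<^sub>v s) = (B *\<^sub>v ?o) \<bullet> (minv ?M *\<^sub>v (B *\<^sub>v s))"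
      using Qs transp_sp[OF B o v] by simp
    also have "\<dots> = (?M *\<^sub>v x) \<bullet> (minv ?M *\<^sub>v (B *\<^sub>v s))" using Mx by simp
    also have "\<dots> = x \<bullet> (?M *\<^sub>v (minv ?M *\<^sub>v (B *\<^sub>v s)))"
      using transp_sp[OF M x v] Mmat_sym[OF B Z] by simp
    also have "?M *\<^sub>v (minv ?M *\<^sub>v (B *\<^sub>v s)) = B *\<^sub>v s"
      using assoc_mult_mat_vec[OF M mi(1) Bs, symmetric] mi(2) Bs by simp
    also have "x \<bullet> (B *\<^sub>v s) = (B\<^sup>T *\<^sub>v x) \<bullet> s" using transp_sp[OF Bt x s] by simp
    finally show "?o \<bullet> (Qmat B Z \<mu> *\<^sub>v s) = ?o \<bullet> s" using bx by simp
  qed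
qed

lemma summat_entry:
  fixes F :: "nat \<Rightarrow> real mat"
  assumes F: "\<And>i. i \<in> I \<Longrightarrow> F i \<in> carrier_mat m m" and v: "v \<in> carrier_vec m" and r: "r < m"
  shows "(mat m m (\<lambda>(r, c). \<Sum>i\<in>I. F i $$ (r, c)) *\<^sub>v v) $ r = (\<Sum>i\<in>I. (F i *\<^sub>v v) $ r)"
proof -
  have "(mat m m (\<lambda>(r, c). \<Sum>i\<in>I. F i $$ (r, c)) *\<^sub>v v) $ r = (\<Sum>c<m. (\<Sum>i\<in>I. F i $$ (r, c)) * v $ c)"
    using v r by (simp add: scalar_prod_def row_def lessThan_atLeast0)
  also have "\<dots> = (\<Sum>i\<in>I. \<Sum>c<m. F i $$ (r, c) * v $ c)"
    by (simp add: sum_distrib_right sum.swap[of _ "{..<m}"])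
  also have "\<dots> = (\<Sum>i\<in>I. (F i *\<^sub>v v) $ r)"
  proof (intro sum.cong refl)
    fix i assume "i \<in> I"
    hence Fi: "F i \<in> carrier_mat m m" by (rule F)
    show "(\<Sum>c<m. F i $$ (r, c) * v $ c) = (F i *\<^sub>v v) $ r"
      using Fi v r by (simp add: scalar_prod_def row_def lessThan_atLeast0)
  qed
  finally show ?thesis .
qed

lemma summat_sp:
  fixes F :: "nat \<Rightarrow> real mat"
  assumes F: "\<And>i. i \<in> I \<Longrightarrow> F i \<in> carrier_mat m m" and v: "v \<in> carrier_vec m" and u: "u \<in> carrier_vec m"
  shows "u \<bullet> (mat m m (\<lambda>(r, c). \<Sum>i\<in>I. F i $$ (r, c)) *\<^sub>v v) = (\<Sum>i\<in>I. u \<bullet> (F i *\<^sub>v v))"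
proof -
  have "u \<bullet> (mat m m (\<lambda>(r, c). \<Sum>i\<in>I. F i $$ (r, c)) *\<^sub>v v) = (\<Sum>r<m. u $ r * (\<Sum>i\<in>I. (F i *\<^sub>v v) $ r))"
    using u v summat_entry[OF F v] by (simp add: scalar_prod_def lessThan_atLeast0)
  also have "\<dots> = (\<Sum>i\<in>I. \<Sum>r<m. u $ r * (F i *\<^sub>v v) $ r)"
    by (simp add: sum_distrib_left sum.swap[of _ "{..<m}"])
  also have "\<dots> = (\<Sum>i\<in>I. u \<bullet> (F i *\<^sub>v v))"
  proof (intro sum.cong refl)
    fix i assume "i \<in> I"
    hence Fi: "F i \<in> carrier_mat m m" by (rule F)
    show "(\<Sum>r<m. u $ r * (F i *\<^sub>v v) $ r) = u \<bullet> (F i *\<^sub>v v)"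
      using Fi v u by (simp add: scalar_prod_def lessThan_atLeast0)
  qed
  finally show ?thesis .
qed

lemma one_minus_entry:
  fixes Q :: "real mat"
  assumes "Q \<in> carrier_mat m m" "v \<in> carrier_vec m" "r < m"
  shows "((1\<^sub>m m - Q) *\<^sub>v v) $ r = v $ r - (Q *\<^sub>v v) $ r"
  using assms by (simp add: minus_mult_distrib_mat_vec[of _ m m])

lemma one_minus_sp:
  fixes Q :: "real mat"
  assumes "Q \<in> carrier_mat m m" "v \<in> carrier_vec m" "u \<in> carrier_vec m"
  shows "u \<bullet> ((1\<^sub>m m - Q) *\<^sub>v v) = u \<bullet> v - u \<bullet> (Q *\<^sub>v v)"
  using assms by (simp add: minus_mult_distrib_mat_vec[of _ m m] scalar_prod_minus_distrib[of _ m])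

lemma trace_form:
  fixes X Y P :: "real mat"
  assumes X: "X \<in> carrier_mat d m" and Y: "Y \<in> carrier_mat d m" and P: "P \<in> carrier_mat m m"
  shows "mtrace (X * P * Y\<^sup>T) = (\<Sum>a<d. row X a \<bullet> (P *\<^sub>v row Y a))"
proof -
  have e: "X * P * Y\<^sup>T = X * (P * Y\<^sup>T)" using X P Y by (simp add: assoc_mult_mat[of _ d m _ m _ d])
  show ?thesis unfolding mtrace_def e using X P Y
    by (intro sum.cong) (auto simp: mult_mat_vec_def)
qed

lemma row_shift:
  assumes S: "S \<in> carrier_mat d m" and t: "t \<in> carrier_vec d" and a: "a < d"
  shows "row (S + outer_prod t (ones_vec m)) a = row S a + (t $ a) \<cdot>\<^sub>v (ones_vec m :: real vec)"
  using assms by (intro eq_vecI) (auto simp: outer_prod_def ones_vec_def)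

lemma quad_expand:
  fixes P :: "real mat"
  assumes P: "P \<in> carrier_mat m m" and s: "s \<in> carrier_vec m" and e: "e \<in> carrier_vec m"
  shows "(s + c \<cdot>\<^sub>v e) \<bullet> (P *\<^sub>v (s + c \<cdot>\<^sub>v e)) =
     s \<bullet> (P *\<^sub>v s) + c * (e \<bullet> (P *\<^sub>v s)) + c * (s \<bullet> (P *\<^sub>v e)) + c * c * (e \<bullet> (P *\<^sub>v e))"
proof -
  have Ps: "P *\<^sub>v s \<in> carrier_vec m" "P *\<^sub>v e \<in> carrier_vec m" using P s e by auto
  have "P *\<^sub>v (s + c \<cdot>\<^sub>v e) = P *\<^sub>v s + c \<cdot>\<^sub>v (P *\<^sub>v e)"
    using P s e by (simp add: mult_add_distrib_mat_vec[of _ m m] mult_mat_vec[of _ m m])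
  hence "(s + c \<cdot>\<^sub>v e) \<bullet> (P *\<^sub>v (s + c \<cdot>\<^sub>v e)) = (s + c \<cdot>\<^sub>v e) \<bullet> (P *\<^sub>v s + c \<cdot>\<^sub>v (P *\<^sub>v e))" by simp
  also have "\<dots> = s \<bullet> (P *\<^sub>v s + c \<cdot>\<^sub>v (P *\<^sub>v e)) + (c \<cdot>\<^sub>v e) \<bullet> (P *\<^sub>v s + c \<cdot>\<^sub>v (P *\<^sub>v e))"
    by (rule add_scalar_prod_distrib[of _ m]) (use s e Ps in auto)
  also have "s \<bullet> (P *\<^sub>v s + c \<cdot>\<^sub>v (P *\<^sub>v e)) = s \<bullet> (P *\<^sub>v s) + s \<bullet> (c \<cdot>\<^sub>v (P *\<^sub>v e))"
    by (rule scalar_prod_add_distrib[of _ m]) (use s e Ps in auto)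
  also have "(c \<cdot>\<^sub>v e) \<bullet> (P *\<^sub>v s + c \<cdot>\<^sub>v (P *\<^sub>v e)) = (c \<cdot>\<^sub>v e) \<bullet> (P *\<^sub>v s) + (c \<cdot>\<^sub>v e) \<bullet> (c \<cdot>\<^sub>v (P *\<^sub>v e))"
    by (rule scalar_prod_add_distrib[of _ m]) (use s e Ps in auto)
  finally show ?thesis using s e Ps by (simp add: algebra_simps)
qed

lemma vec_eq_entries:
  assumes "(a::real vec) \<in> carrier_vec m" "b \<in> carrier_vec m"
  shows "a = b \<longleftrightarrow> (\<forall>r<m. a $ r = b $ r)"
  using assms by (auto intro!: eq_vecI)

lemma trace_shift:
  fixes P S :: "real mat"
  assumes P: "P \<in> carrier_mat m m" and S: "S \<in> carrier_mat d m" and t: "t \<in> carrier_vec d"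
  shows "mtrace ((S + outer_prod t (ones_vec m)) * P * (S + outer_prod t (ones_vec m))\<^sup>T)
    = (\<Sum>a<d. row S a \<bullet> (P *\<^sub>v row S a) + t $ a * (ones_vec m \<bullet> (P *\<^sub>v row S a))
         + t $ a * (row S a \<bullet> (P *\<^sub>v ones_vec m)) + t $ a * t $ a * (ones_vec m \<bullet> (P *\<^sub>v ones_vec m)))"
proof -
  have e: "ones_vec m \<in> carrier_vec m" by (simp add: ones_vec_def)
  have X: "S + outer_prod t (ones_vec m) \<in> carrier_mat d m" using S t by (simp add: outer_prod_def ones_vec_def)
  show ?thesis unfolding trace_form[OF X X P]
  proof (intro sum.cong refl)
    fix a assume "a \<in> {..<d}" hence a: "a < d" by simp
    have s: "row S a \<in> carrier_vec m" using S a by simp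
    show "row (S + outer_prod t (ones_vec m)) a \<bullet> (P *\<^sub>v row (S + outer_prod t (ones_vec m)) a) =
      row S a \<bullet> (P *\<^sub>v row S a) + t $ a * (ones_vec m \<bullet> (P *\<^sub>v row S a))
         + t $ a * (row S a \<bullet> (P *\<^sub>v ones_vec m)) + t $ a * t $ a * (ones_vec m \<bullet> (P *\<^sub>v ones_vec m))"
      unfolding row_shift[OF S t a] by (rule quad_expand[OF P s e])
  qed
qed

theorem theorem2:
  fixes n m d :: nat and l k :: "nat \<Rightarrow> nat"
    and B Z :: "nat \<Rightarrow> real mat" and \<mu> :: "nat \<Rightarrow> real"
  assumes "n \<ge> 1" and "m \<ge> 1" and "d \<ge> 1"
    and "\<And>i. i \<in> {1..n} \<Longrightarrow> B i \<in> carrier_mat (l i) m"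
    and "\<And>i. i \<in> {1..n} \<Longrightarrow> Z i \<in> carrier_mat (k i) (l i)"
    and "\<And>i. i \<in> {1..n} \<Longrightarrow> \<mu> i \<ge> 0"
    and "\<And>i. i \<in> {1..n} \<Longrightarrow> invertible_mat (Mmat (B i) (Z i) (\<mu> i))"
  shows
   "(PII n m B Z \<mu> *\<^sub>v ones_vec m = 0\<^sub>v m
      \<longleftrightarrow> QII n m B Z \<mu> *\<^sub>v ones_vec m = real n \<cdot>\<^sub>v ones_vec m)
    \<and> (QII n m B Z \<mu> *\<^sub>v ones_vec m = real n \<cdot>\<^sub>v ones_vec m
      \<longleftrightarrow> (\<forall>i\<in>{1..n}. Qmat (B i) (Z i) (\<mu> i) *\<^sub>v ones_vec m = ones_vec m))
    \<and> ((\<forall>i\<in>{1..n}. Qmat (B i) (Z i) (\<mu> i) *\<^sub>v ones_vec m = ones_vec m)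
      \<longleftrightarrow> (\<forall>S \<in> carrier_mat d m. \<forall>t \<in> carrier_vec d.
            mtrace ((S + outer_prod t (ones_vec m)) * PII n m B Z \<mu> * (S + outer_prod t (ones_vec m))\<^sup>T)
            = mtrace (S * PII n m B Z \<mu> * S\<^sup>T)))
    \<and> ((\<forall>S \<in> carrier_mat d m. \<forall>t \<in> carrier_vec d.
            mtrace ((S + outer_prod t (ones_vec m)) * PII n m B Z \<mu> * (S + outer_prod t (ones_vec m))\<^sup>T)
            = mtrace (S * PII n m B Z \<mu> * S\<^sup>T))
      \<longleftrightarrow> (\<forall>i\<in>{1..n}. \<exists>x \<in> carrier_vec (l i).
            (B i)\<^sup>T *\<^sub>v x = ones_vec m \<and> (\<mu> i > 0 \<longrightarrow> Z i *\<^sub>v x = 0\<^sub>v (k i))))"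
proof -
  note Bc = assms(4) and Zc = assms(5) and muc = assms(6) and invc = assms(7)
  define Q where "Q i = Qmat (B i) (Z i) (\<mu> i)" for i
  define P where "P = PII n m B Z \<mu>"
  define e where "e = (ones_vec m :: real vec)"
  have e: "e \<in> carrier_vec m" by (simp add: e_def ones_vec_def)
  have Qc: "Q i \<in> carrier_mat m m" if i: "i \<in> {1..n}" for i
  proof -
    have M: "Mmat (B i) (Z i) (\<mu> i) \<in> carrier_mat (l i) (l i)" using Bc[OF i] Zc[OF i] by (simp add: Mmat_def)
    show ?thesis unfolding Q_def Qmat_def using minv_props(1)[OF M invc[OF i]] Bc[OF i] by simp
  qed
  have Pdef: "P = mat m m (\<lambda>(r, c). \<Sum>i\<in>{1..n}. (1\<^sub>m m - Q i) $$ (r, c))"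
    unfolding P_def PII_def Q_def by simp
  have Pc: "P \<in> carrier_mat m m" unfolding Pdef by simp
  have IMQc: "1\<^sub>m m - Q i \<in> carrier_mat m m" if "i \<in> {1..n}" for i using minus_carrier_mat[OF Qc[OF that]] .
  have Pent: "(P *\<^sub>v v) $ r = (\<Sum>i\<in>{1..n}. v $ r - (Q i *\<^sub>v v) $ r)" if v: "v \<in> carrier_vec m" and r: "r < m" for v r
  proof -
    have "(P *\<^sub>v v) $ r = (\<Sum>i\<in>{1..n}. ((1\<^sub>m m - Q i) *\<^sub>v v) $ r)"
      unfolding Pdef by (rule summat_entry[OF IMQc v r])
    also have "\<dots> = (\<Sum>i\<in>{1..n}. v $ r - (Q i *\<^sub>v v) $ r)"
      by (intro sum.cong refl one_minus_entry[OF Qc v r])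
    finally show ?thesis .
  qed
  have Qent: "(QII n m B Z \<mu> *\<^sub>v v) $ r = (\<Sum>i\<in>{1..n}. (Q i *\<^sub>v v) $ r)" if v: "v \<in> carrier_vec m" and r: "r < m" for v r
  proof -
    have "QII n m B Z \<mu> = mat m m (\<lambda>(r, c). \<Sum>i\<in>{1..n}. Q i $$ (r, c))"
      unfolding QII_def Q_def by simp
    thus ?thesis using summat_entry[of "{1..n}" Q m v r, OF Qc v r] by simp
  qed
  have Psp: "u \<bullet> (P *\<^sub>v v) = (\<Sum>i\<in>{1..n}. u \<bullet> v - u \<bullet> (Q i *\<^sub>v v))" if v: "v \<in> carrier_vec m" and u: "u \<in> carrier_vec m" for u v
  proof -
    have "u \<bullet> (P *\<^sub>v v) = (\<Sum>i\<in>{1..n}. u \<bullet> ((1\<^sub>m m - Q i) *\<^sub>v v))"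
      unfolding Pdef by (rule summat_sp[OF IMQc v u])
    also have "\<dots> = (\<Sum>i\<in>{1..n}. u \<bullet> v - u \<bullet> (Q i *\<^sub>v v))"
      by (intro sum.cong refl one_minus_sp[OF Qc v u])
    finally show ?thesis .
  qed
  define C where "C = (\<forall>i\<in>{1..n}. Q i *\<^sub>v e = e)"
  define E where "E = (\<forall>i\<in>{1..n}. \<exists>x \<in> carrier_vec (l i).
            (B i)\<^sup>T *\<^sub>v x = e \<and> (\<mu> i > 0 \<longrightarrow> Z i *\<^sub>v x = 0\<^sub>v (k i)))"
  define D where "D = (\<forall>S \<in> carrier_mat d m. \<forall>t \<in> carrier_vec d.
            mtrace ((S + outer_prod t e) * P * (S + outer_prod t e)\<^sup>T) = mtrace (S * P * S\<^sup>T))"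
  define A where "A = (P *\<^sub>v e = 0\<^sub>v m)"
  define Bq where "Bq = (QII n m B Z \<mu> *\<^sub>v e = real n \<cdot>\<^sub>v e)"
  note pi = per_i[OF Bc Zc muc invc, folded Q_def e_def]
  have Cstar: C if h: "e \<bullet> (P *\<^sub>v e) = 0"
  proof -
    have "(\<Sum>i\<in>{1..n}. e \<bullet> e - e \<bullet> (Q i *\<^sub>v e)) = 0" using h Psp[OF e e] by simp
    hence "\<forall>i\<in>{1..n}. e \<bullet> e - e \<bullet> (Q i *\<^sub>v e) = 0"
      using pi(1) by (subst sum_nonneg_eq_0_iff[symmetric]) auto
    thus C unfolding C_def using pi(2) by blast
  qed
  have QIIc: "QII n m B Z \<mu> *\<^sub>v e \<in> carrier_vec m" 
  proof -
    have "QII n m B Z \<mu> \<in> carrier_mat m m" unfolding QII_def by simp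
    thus ?thesis using e by (rule mult_mat_vec_carrier)
  qed
  have AB: "A \<longleftrightarrow> Bq"
  proof -
    have Pec: "P *\<^sub>v e \<in> carrier_vec m" using Pc e by simp
    have "A \<longleftrightarrow> (\<forall>r<m. (P *\<^sub>v e) $ r = (0\<^sub>v m) $ r)" unfolding A_def
      by (rule vec_eq_entries[OF Pec zero_carrier_vec])
    also have "\<dots> \<longleftrightarrow> (\<forall>r<m. (P *\<^sub>v e) $ r = 0)" by simp
    also have "\<dots> \<longleftrightarrow> (\<forall>r<m. (QII n m B Z \<mu> *\<^sub>v e) $ r = real n)"
    proof -
      have "(P *\<^sub>v e) $ r = real n - (QII n m B Z \<mu> *\<^sub>v e) $ r" if r: "r < m" for r
        unfolding Pent[OF e r] Qent[OF e r] using r by (simp add: sum_subtractf e_def ones_vec_def)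
      thus ?thesis by auto
    qed
    also have "\<dots> \<longleftrightarrow> Bq" unfolding Bq_def using vec_eq_entries[OF QIIc, of "real n \<cdot>\<^sub>v e"] e
      by (simp add: e_def ones_vec_def)
    finally show ?thesis .
  qed
  have CB: "C \<Longrightarrow> Bq"
  proof -
    assume C
    have "(QII n m B Z \<mu> *\<^sub>v e) $ r = (real n \<cdot>\<^sub>v e) $ r" if r: "r < m" for r
      unfolding Qent[OF e r] using \<open>C\<close> r e unfolding C_def by (simp add: e_def ones_vec_def)
    thus Bq unfolding Bq_def using vec_eq_entries[OF QIIc, of "real n \<cdot>\<^sub>v e"] e by simp
  qed
  have BC: "Bq \<Longrightarrow> C"
  proof -
    assume Bq hence A using AB by simp
    hence "e \<bullet> (P *\<^sub>v e) = 0" unfolding A_def using e by simp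
    thus C by (rule Cstar)
  qed
  have CE: "C \<longleftrightarrow> E"
    unfolding C_def E_def using pi(3) pi(4) by blast
  have CD: "C \<Longrightarrow> D"
  proof -
    assume C
    hence A using CB AB by simp
    hence Pe: "P *\<^sub>v e = 0\<^sub>v m" unfolding A_def .
    have eQ: "\<forall>s\<in>carrier_vec m. e \<bullet> (Q i *\<^sub>v s) = e \<bullet> s" if i: "i \<in> {1..n}" for i
    proof -
      obtain x where "x \<in> carrier_vec (l i)" "(B i)\<^sup>T *\<^sub>v x = e" "\<mu> i > 0 \<longrightarrow> Z i *\<^sub>v x = 0\<^sub>v (k i)"
        using \<open>C\<close> CE i unfolding E_def by blast
      thus ?thesis using pi(4)[OF i i i i] by blast
    qed
    have ePs: "e \<bullet> (P *\<^sub>v s) = 0" if s: "s \<in> carrier_vec m" for s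
    proof -
      have "e \<bullet> (P *\<^sub>v s) = (\<Sum>i\<in>{1..n}. e \<bullet> s - e \<bullet> (Q i *\<^sub>v s))" by (rule Psp[OF s e])
      also have "\<dots> = (\<Sum>i\<in>{1..n}. (0::real))"
      proof (intro sum.cong refl)
        fix i assume "i \<in> {1..n}"
        hence "e \<bullet> (Q i *\<^sub>v s) = e \<bullet> s" using eQ s by blast
        thus "e \<bullet> s - e \<bullet> (Q i *\<^sub>v s) = 0" by simp
      qed
      finally show ?thesis by simp
    qed
    show D unfolding D_def
    proof (intro ballI)
      fix S :: "real mat" and t :: "real vec" assume S: "S \<in> carrier_mat d m" and t: "t \<in> carrier_vec d"
      have "mtrace ((S + outer_prod t e) * P * (S + outer_prod t e)\<^sup>T) = (\<Sum>a<d. row S a \<bullet> (P *\<^sub>v row S a))"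
        unfolding trace_shift[OF Pc S t, folded e_def]
      proof (intro sum.cong refl)
        fix a assume "a \<in> {..<d}"
        hence r: "row S a \<in> carrier_vec m" using S by simp
        have 1: "e \<bullet> (P *\<^sub>v row S a) = 0" by (rule ePs[OF r])
        have 2: "row S a \<bullet> (P *\<^sub>v e) = 0" unfolding Pe using r by simp
        have 3: "e \<bullet> (P *\<^sub>v e) = 0" unfolding Pe using e by simp
        show "row S a \<bullet> (P *\<^sub>v row S a) + t $ a * (e \<bullet> (P *\<^sub>v row S a)) +
          t $ a * (row S a \<bullet> (P *\<^sub>v e)) + t $ a * t $ a * (e \<bullet> (P *\<^sub>v e)) = row S a \<bullet> (P *\<^sub>v row S a)"
          unfolding 1 2 3 by simp
      qed
      also have "\<dots> = mtrace (S * P * S\<^sup>T)" using trace_form[OF S S Pc] by simp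
      finally show "mtrace ((S + outer_prod t e) * P * (S + outer_prod t e)\<^sup>T) = mtrace (S * P * S\<^sup>T)" .
    qed
  qed
  have DC: "D \<Longrightarrow> C"
  proof -
    assume D
    let ?S = "0\<^sub>m d m :: real mat"
    let ?t = "unit_vec d 0 :: real vec"
    have S: "?S \<in> carrier_mat d m" by simp
    have t: "?t \<in> carrier_vec d" by simp
    have eq: "mtrace ((?S + outer_prod ?t e) * P * (?S + outer_prod ?t e)\<^sup>T) = mtrace (?S * P * ?S\<^sup>T)"
      using \<open>D\<close> S t unfolding D_def by blast
    have P0: "P *\<^sub>v 0\<^sub>v m = 0\<^sub>v m" using Pc by (intro eq_vecI) auto
    have "mtrace ((?S + outer_prod ?t e) * P * (?S + outer_prod ?t e)\<^sup>T) = (\<Sum>a<d. ?t $ a * ?t $ a * (e \<bullet> (P *\<^sub>v e)))"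
      unfolding trace_shift[OF Pc S t, folded e_def]
    proof (intro sum.cong refl)
      fix a assume "a \<in> {..<d}"
      hence r: "row ?S a = 0\<^sub>v m" by (intro eq_vecI) auto
      have 1: "e \<bullet> (P *\<^sub>v row ?S a) = 0" unfolding r P0 using e by simp
      have 2: "row ?S a \<bullet> (P *\<^sub>v e) = 0" unfolding r using Pc e by simp
      have 3: "row ?S a \<bullet> (P *\<^sub>v row ?S a) = 0" unfolding r P0 by simp
      show "row ?S a \<bullet> (P *\<^sub>v row ?S a) + ?t $ a * (e \<bullet> (P *\<^sub>v row ?S a)) +
          ?t $ a * (row ?S a \<bullet> (P *\<^sub>v e)) + ?t $ a * ?t $ a * (e \<bullet> (P *\<^sub>v e)) = ?t $ a * ?t $ a * (e \<bullet> (P *\<^sub>v e))"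
        unfolding 1 2 3 by simp
    qed
    also have "\<dots> = e \<bullet> (P *\<^sub>v e)"
    proof -
      have "(\<Sum>a<d. ?t $ a * ?t $ a * (e \<bullet> (P *\<^sub>v e))) = (\<Sum>a<d. if a = 0 then e \<bullet> (P *\<^sub>v e) else 0)"
        by (intro sum.cong refl) (auto simp: unit_vec_def)
      also have "\<dots> = e \<bullet> (P *\<^sub>v e)" using assms(3) by (simp add: sum.delta)
      finally show ?thesis .
    qed
    finally have l: "mtrace ((?S + outer_prod ?t e) * P * (?S + outer_prod ?t e)\<^sup>T) = e \<bullet> (P *\<^sub>v e)" .
    have "mtrace (?S * P * ?S\<^sup>T) = 0" using trace_form[OF S S Pc] P0 by simp
    hence "e \<bullet> (P *\<^sub>v e) = 0" using eq l by simp
    thus C by (rule Cstar)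
  qed
  have main: "(A \<longleftrightarrow> Bq) \<and> (Bq \<longleftrightarrow> C) \<and> (C \<longleftrightarrow> D) \<and> (D \<longleftrightarrow> E)"
    using AB CB BC CD DC CE by blast
  thus ?thesis unfolding A_def Bq_def C_def D_def E_def P_def Q_def e_def .
qed

end
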